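(* If $\Delta\subset\mathbb{R}^2$ is a non-empty minimal lattice polygon with $\operatorname{lw}(\Delta)=d>0$, then $\operatorname{ls}_\square(\Delta)=d$; that is, there is a unimodular transformation $\varphi$ with $\varphi(\Delta)\subset[0,d]\times[0,d]$.
   Context: A lattice polygon is the convex hull of a finite non-empty set of points of $\mathbb{Z}^2$. For a lattice polygon $\Delta$ and a non-zero primitive $v\in\mathbb{Z}^2$, $\operatorname{lw}_v(\Delta)=\max_{Q\in\Delta}\langle Q,v\rangle-\min_{Q\in\Delta}\langle Q,v\rangle$, and the lattice width is $\operatorname{lw}(\Delta)=\min_v\operatorname{lw}_v(\Delta)$ over all non-zero primitive $v\in\mathbb{Z}^2$. A lattice polygon $\Delta$ is minimal if $\operatorname{lw}(\Delta')<\operatorname{lw}(\Delta)$ for every lattice polygon $\Delta'\subsetneq\Delta$. A unimodular transformation is a map $x\mapsto Ax+b$ with $A\in\mathrm{GL}_2(\mathbb{Z})$, $b\in\mathbb{Z}^2$. With $\square=[0,1]^2$, $\operatorname{ls}_\square(\Delta)$ is the smallest integer $d\ge0$ such that some unimodular transformation maps $\Delta$ into $d\square=[0,d]^2$. *)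

theory Defs
  imports "HOL-Analysis.Analysis"
begin

definition lattice_pt :: "int \<times> int \<Rightarrow> real \<times> real" where
  "lattice_pt p = (real_of_int (fst p), real_of_int (snd p))"

definition lattice_polygon :: "(real \<times> real) set \<Rightarrow> bool" where
  "lattice_polygon P \<longleftrightarrow>
     (\<exists>S :: (int \<times> int) set. finite S \<and> S \<noteq> {} \<and> P = convex hull (lattice_pt ` S))"

definition primitive :: "int \<times> int \<Rightarrow> bool" where
  "primitive v \<longleftrightarrow> v \<noteq> (0, 0) \<and> gcd (fst v) (snd v) = 1"

definition pair_ip :: "real \<times> real \<Rightarrow> int \<times> int \<Rightarrow> real" where
  "pair_ip Q v = fst Q * real_of_int (fst v) + snd Q * real_of_int (snd v)"

definition lw_dir :: "(real \<times> real) set \<Rightarrow> int \<times> int \<Rightarrow> real" where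
  "lw_dir P v = (SUP Q\<in>P. pair_ip Q v) - (INF Q\<in>P. pair_ip Q v)"

definition lattice_width :: "(real \<times> real) set \<Rightarrow> real" where
  "lattice_width P = (INF v\<in>{v. primitive v}. lw_dir P v)"

definition minimal_polygon :: "(real \<times> real) set \<Rightarrow> bool" where
  "minimal_polygon P \<longleftrightarrow> lattice_polygon P \<and>
     (\<forall>P'. lattice_polygon P' \<and> P' \<subset> P \<longrightarrow> lattice_width P' < lattice_width P)"

definition unimodular :: "(real \<times> real \<Rightarrow> real \<times> real) \<Rightarrow> bool" where
  "unimodular f \<longleftrightarrow> (\<exists>a b c e t1 t2 :: int. \<bar>a * e - b * c\<bar> = 1 \<and>
     f = (\<lambda>(x, y). (of_int a * x + of_int b * y + of_int t1,
                    of_int c * x + of_int e * y + of_int t2)))"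

definition ls_square :: "(real \<times> real) set \<Rightarrow> nat" where
  "ls_square P = (LEAST d::nat. \<exists>\<phi>. unimodular \<phi> \<and>
                     \<phi> ` P \<subseteq> {0..real d} \<times> {0..real d})"

end

theory Submission
  imports Defs
begin


definition lv :: "int \<times> int \<Rightarrow> int \<times> int \<Rightarrow> int" where
  "lv p w = fst p * fst w + snd p * snd w"
definition NN :: "(int \<times> int) set \<Rightarrow> int \<times> int \<Rightarrow> int" where
  "NN S w = Max ((\<lambda>p. lv p w) ` S) - Min ((\<lambda>p. lv p w) ` S)"
definition det2 :: "int \<times> int \<Rightarrow> int \<times> int \<Rightarrow> int" where
  "det2 u w = fst u * snd w - snd u * fst w"

lemma pair_ip_lat: "pair_ip (lattice_pt p) w = of_int (lv p w)"
  by (simp add: pair_ip_def lattice_pt_def lv_def)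

lemma pair_ip_inner: "pair_ip z w = inner (real_of_int (fst w), real_of_int (snd w)) z"
  by (cases z) (simp add: pair_ip_def mult.commute)

lemma hull_bounds:
  assumes "finite S" "S \<noteq> {}" "z \<in> convex hull (lattice_pt ` S)"
  shows "of_int (Min ((\<lambda>p. lv p w) ` S)) \<le> pair_ip z w \<and> pair_ip z w \<le> of_int (Max ((\<lambda>p. lv p w) ` S))"
proof -
  let ?M = "real_of_int (Max ((\<lambda>p. lv p w) ` S))"
  let ?m = "real_of_int (Min ((\<lambda>p. lv p w) ` S))"
  have c1: "convex {z. pair_ip z w \<le> ?M}" unfolding pair_ip_inner by (rule convex_halfspace_le)
  have c2: "convex {z. pair_ip z w \<ge> ?m}" unfolding pair_ip_inner by (rule convex_halfspace_ge)
  have s1: "lattice_pt ` S \<subseteq> {z. pair_ip z w \<le> ?M}"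
    using assms by (auto simp: pair_ip_lat)
  have s2: "lattice_pt ` S \<subseteq> {z. pair_ip z w \<ge> ?m}"
    using assms by (auto simp: pair_ip_lat)
  have "convex hull (lattice_pt ` S) \<subseteq> {z. pair_ip z w \<le> ?M}"
    using s1 c1 by (intro hull_minimal)
  moreover have "convex hull (lattice_pt ` S) \<subseteq> {z. pair_ip z w \<ge> ?m}"
    using s2 c2 by (intro hull_minimal)
  ultimately show ?thesis using assms(3) by auto
qed

lemma NN_ge: "finite S \<Longrightarrow> p \<in> S \<Longrightarrow> q \<in> S \<Longrightarrow> lv p w - lv q w \<le> NN S w"
  unfolding NN_def
  by (smt (verit) Max_ge Min_le finite_imageI imageI)

lemma NN_attain: "finite S \<Longrightarrow> S \<noteq> {} \<Longrightarrow> \<exists>p\<in>S. \<exists>q\<in>S. NN S w = lv p w - lv q w"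
proof -
  assume a: "finite S" "S \<noteq> {}"
  have "Max ((\<lambda>p. lv p w) ` S) \<in> (\<lambda>p. lv p w) ` S"
    using Max_in a by auto
  then obtain p where p: "p \<in> S" "Max ((\<lambda>p. lv p w) ` S) = lv p w" by auto
  have "Min ((\<lambda>p. lv p w) ` S) \<in> (\<lambda>p. lv p w) ` S"
    using Min_in a by auto
  then obtain q where q: "q \<in> S" "Min ((\<lambda>p. lv p w) ` S) = lv q w" by auto
  have "NN S w = lv p w - lv q w" unfolding NN_def p(2) q(2) ..
  thus ?thesis using p(1) q(1) by blast
qed

lemma NN_nonneg: "finite S \<Longrightarrow> S \<noteq> {} \<Longrightarrow> 0 \<le> NN S w"
proof -
  assume a: "finite S" "S \<noteq> {}"
  then obtain p where "p \<in> S" by blast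
  from NN_ge[OF a(1) this this, of w] show ?thesis by simp
qed

lemma lv_add: "lv p (fst x + fst y, snd x + snd y) = lv p x + lv p y"
  by (simp add: lv_def algebra_simps)
lemma lv_smult: "lv p (k * fst x, k * snd x) = k * lv p x"
  by (simp add: lv_def algebra_simps)

lemma NN_add: assumes "finite S" "S \<noteq> {}"
  shows "NN S (fst x + fst y, snd x + snd y) \<le> NN S x + NN S y"
proof -
  obtain p q where "p \<in> S" "q \<in> S" "NN S (fst x + fst y, snd x + snd y) = lv p (fst x + fst y, snd x + snd y) - lv q (fst x + fst y, snd x + snd y)"
    using NN_attain assms by blast
  then show ?thesis using NN_ge[OF assms(1), of p q x] NN_ge[OF assms(1), of p q y]
    by (simp add: lv_add)
qed

lemma NN_smult_le: assumes "finite S" "S \<noteq> {}"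
  shows "NN S (k * fst x, k * snd x) \<le> \<bar>k\<bar> * NN S x"
proof -
  obtain p q where pq: "p \<in> S" "q \<in> S" "NN S (k * fst x, k * snd x) = lv p (k * fst x, k * snd x) - lv q (k * fst x, k * snd x)"
    using NN_attain assms by blast
  have "k * (lv p x - lv q x) \<le> \<bar>k\<bar> * NN S x"
  proof (cases "k \<ge> 0")
    case True thus ?thesis using NN_ge[OF assms(1) pq(1,2), of x] by (simp add: mult_left_mono)
  next
    case False
    hence "k * (lv p x - lv q x) = \<bar>k\<bar> * (lv q x - lv p x)" by (simp add: algebra_simps)
    thus ?thesis using NN_ge[OF assms(1) pq(2,1), of x] False by (simp add: mult_left_mono)
  qed
  thus ?thesis using pq by (simp add: lv_smult algebra_simps)
qed

lemma NN_smult_ge: assumes "finite S" "S \<noteq> {}"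
  shows "\<bar>k\<bar> * NN S x \<le> NN S (k * fst x, k * snd x)"
proof -
  obtain p q where pq: "p \<in> S" "q \<in> S" "NN S x = lv p x - lv q x"
    using NN_attain assms by blast
  show ?thesis
  proof (cases "k \<ge> 0")
    case True
    have "lv p (k * fst x, k * snd x) - lv q (k * fst x, k * snd x) \<le> NN S (k * fst x, k * snd x)"
      using NN_ge[OF assms(1) pq(1,2)] .
    moreover have "\<bar>k\<bar> * NN S x = k * (lv p x - lv q x)"
      using True pq(3) by simp
    moreover have "k * (lv p x - lv q x) = lv p (k * fst x, k * snd x) - lv q (k * fst x, k * snd x)"
      by (simp add: lv_smult right_diff_distrib)
    ultimately show ?thesis by linarith
  next
    case False
    have "lv q (k * fst x, k * snd x) - lv p (k * fst x, k * snd x) \<le> NN S (k * fst x, k * snd x)"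
      using NN_ge[OF assms(1) pq(2,1)] .
    moreover have "\<bar>k\<bar> * NN S x = (-k) * (lv p x - lv q x)"
      using False by (subst pq(3)) simp
    moreover have "(-k) * (lv p x - lv q x) = k * (lv q x - lv p x)" by (simp add: algebra_simps)
    moreover have "k * (lv q x - lv p x) = lv q (k * fst x, k * snd x) - lv p (k * fst x, k * snd x)"
      by (simp add: lv_smult right_diff_distrib)
    ultimately show ?thesis by linarith
  qed
qed

lemma lw_dir_hull:
  assumes "finite S" "S \<noteq> {}"
  shows "lw_dir (convex hull (lattice_pt ` S)) w = of_int (NN S w)"
proof -
  let ?P = "convex hull (lattice_pt ` S)"
  have "Max ((\<lambda>p. lv p w) ` S) \<in> (\<lambda>p. lv p w) ` S"
    using Max_in assms by auto
  then obtain p where p: "p \<in> S" "Max ((\<lambda>p. lv p w) ` S) = lv p w" by auto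
  have "Min ((\<lambda>p. lv p w) ` S) \<in> (\<lambda>p. lv p w) ` S"
    using Min_in assms by auto
  then obtain q where q: "q \<in> S" "Min ((\<lambda>p. lv p w) ` S) = lv q w" by auto
  have "(SUP Q\<in>?P. pair_ip Q w) = of_int (lv p w)"
    apply (rule cSup_eq_maximum)
    using p hull_bounds[OF assms] pair_ip_lat hull_inc
     apply (metis imageI)
    using hull_bounds[OF assms, of _ w] p(2) by fastforce
  moreover have "(INF Q\<in>?P. pair_ip Q w) = of_int (lv q w)"
    apply (rule cInf_eq_minimum)
    using q hull_bounds[OF assms] pair_ip_lat hull_inc
     apply (metis imageI)
    using hull_bounds[OF assms, of _ w] q(2) by fastforce
  ultimately show ?thesis using p q by (simp add: lw_dir_def NN_def)
qed

lemma prim_of_det: assumes "\<bar>det2 w1 w\<bar> = 1" shows "primitive w"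
proof -
  have "gcd (fst w) (snd w) dvd det2 w1 w"
    unfolding det2_def by (simp add: dvd_diff)
  hence "gcd (fst w) (snd w) dvd \<bar>det2 w1 w\<bar>" by simp
  hence "gcd (fst w) (snd w) dvd 1" using assms by simp
  hence "\<bar>gcd (fst w) (snd w)\<bar> = 1" by (simp add: zdvd1_eq)
  hence g: "gcd (fst w) (snd w) = 1" by simp
  moreover have "w \<noteq> (0,0)" using g by auto
  ultimately show ?thesis by (simp add: primitive_def)
qed

lemma bezout_det: assumes "primitive w1" shows "\<exists>u0. det2 w1 u0 = 1"
proof -
  obtain s t where "s * fst w1 + t * snd w1 = gcd (fst w1) (snd w1)" using bezout_int by blast
  hence "s * fst w1 + t * snd w1 = 1" using assms by (simp add: primitive_def)
  hence "det2 w1 (-t, s) = 1" by (simp add: det2_def algebra_simps)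
  thus ?thesis by blast
qed

lemma round_int: assumes "(D::int) \<noteq> 0" shows "\<exists>k. 2 * \<bar>D * k - \<beta>\<bar> \<le> \<bar>D\<bar>"
proof -
  define A where "A = \<bar>D\<bar>"
  have A: "A > 0" using assms by (simp add: A_def)
  define k where "k = (2 * (\<beta>) + A) div (2 * A)"
  define X where "X = 2 * (\<beta>) + A"
  have e: "2 * A * k + X mod (2 * A) = X" unfolding k_def X_def[symmetric] by (rule mult_div_mod_eq)
  have "0 \<le> X mod (2 * A)" "X mod (2 * A) < 2 * A" using A by auto
  hence "2 * A * k \<le> 2 * (\<beta>) + A" "2 * (\<beta>) + A < 2 * A * k + 2 * A"
    using e unfolding X_def by linarith+
  hence "2 * (A * k) \<le> 2 * (\<beta>) + A" "2 * (\<beta>) + A < 2 * (A * k) + 2 * A"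
    by (simp_all add: mult.assoc)
  hence "2 * \<bar>A * k - \<beta>\<bar> \<le> A"
    by (cases "A * k - \<beta> \<ge> 0") (simp_all add: abs_if)
  moreover have "\<bar>D * (sgn D * k) - \<beta>\<bar> = \<bar>A * k - \<beta>\<bar>"
    using assms unfolding A_def
    by (cases "D > 0") auto
  ultimately show ?thesis unfolding A_def by metis
qed

lemma reduction:
  assumes L: "finite L" "L \<noteq> {}" and u0: "det2 w1 u0 = 1" and al: "det2 w1 w \<noteq> 0"
  shows "\<exists>u. det2 w1 u = 1 \<and> 2 * \<bar>det2 w1 w\<bar> * NN L u \<le> 2 * NN L w + \<bar>det2 w1 w\<bar> * NN L w1"
proof -
  define \<alpha> where "\<alpha> = det2 w1 w"
  define \<beta> where "\<beta> = det2 w u0"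
  obtain k where k: "2 * \<bar>\<alpha> * k - \<beta>\<bar> \<le> \<bar>\<alpha>\<bar>" using round_int al unfolding \<alpha>_def by blast
  define u where "u = (fst u0 + k * fst w1, snd u0 + k * snd w1)"
  define c where "c = \<alpha> * k - \<beta>"
  have du: "det2 w1 u = 1" using u0 unfolding u_def det2_def by (simp add: algebra_simps)
  have decomp: "(\<alpha> * fst u, \<alpha> * snd u) = (fst w + fst (c * fst w1, c * snd w1), snd w + snd (c * fst w1, c * snd w1))"
    using u0 unfolding u_def c_def \<alpha>_def \<beta>_def det2_def
    by (simp add: algebra_simps) (metis (no_types, opaque_lifting) mult.commute mult.left_commute
        distrib_left mult.right_neutral ring_class.ring_distribs(1))
  have "\<bar>\<alpha>\<bar> * NN L u \<le> NN L (\<alpha> * fst u, \<alpha> * snd u)" by (rule NN_smult_ge[OF L])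
  also have "\<dots> \<le> NN L w + NN L (c * fst w1, c * snd w1)"
    unfolding decomp by (rule NN_add[OF L])
  also have "NN L (c * fst w1, c * snd w1) \<le> \<bar>c\<bar> * NN L w1" by (rule NN_smult_le[OF L])
  finally have "\<bar>\<alpha>\<bar> * NN L u \<le> NN L w + \<bar>c\<bar> * NN L w1" by simp
  moreover have "2 * \<bar>c\<bar> * NN L w1 \<le> \<bar>\<alpha>\<bar> * NN L w1"
    using k NN_nonneg[OF L] unfolding c_def by (simp add: mult_right_mono)
  ultimately have "2 * \<bar>\<alpha>\<bar> * NN L u \<le> 2 * NN L w + \<bar>\<alpha>\<bar> * NN L w1" by linarith
  thus ?thesis using du unfolding \<alpha>_def by blast
qed

lemma drop_lemma:
  assumes fin: "finite S" and v: "v \<in> S" and ne: "S - {v} \<noteq> {}"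
    and q: "q \<in> convex hull (lattice_pt ` (S - {v}))"
    and d: "\<bar>pair_ip q w - of_int (lv v w)\<bar> \<le> \<delta>"
  shows "of_int (NN S w) - \<delta> \<le> of_int (NN (S - {v}) w)"
proof -
  define M where "M = Max ((\<lambda>p. lv p w) ` (S - {v}))"
  define m where "m = Min ((\<lambda>p. lv p w) ` (S - {v}))"
  have fin': "finite (S - {v})" using fin by simp
  have NN': "NN (S - {v}) w = M - m" unfolding NN_def M_def m_def ..
  have hb: "of_int m \<le> pair_ip q w \<and> pair_ip q w \<le> of_int M"
    using hull_bounds[OF fin' ne q] unfolding M_def m_def .
  have up: "real_of_int (lv x w) \<le> of_int M + \<delta>" if "x \<in> S" for x
  proof (cases "x = v")
    case True thus ?thesis using hb d by (auto simp: abs_le_iff)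
  next
    case False
    hence "lv x w \<le> M" unfolding M_def using that fin' by (intro Max_ge) auto
    moreover have "0 \<le> \<delta>" using d by linarith
    ultimately show ?thesis by linarith
  qed
  have lo: "of_int m - \<delta> \<le> real_of_int (lv x w)" if "x \<in> S" for x
  proof (cases "x = v")
    case True thus ?thesis using hb d by (auto simp: abs_le_iff)
  next
    case False
    hence "m \<le> lv x w" unfolding m_def using that fin' by (intro Min_le) auto
    moreover have "0 \<le> \<delta>" using d by linarith
    ultimately show ?thesis by linarith
  qed
  obtain p r where pr: "p \<in> S" "r \<in> S" "NN S w = lv p w - lv r w"
    using NN_attain[OF fin] v by blast
  show ?thesis
  proof (cases "p = v \<or> r = v")
    case True
    show ?thesis
    proof (cases "p = r")
      case True
      hence "NN S w = 0" using pr by simp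
      moreover have "0 \<le> NN (S - {v}) w" using NN_nonneg[OF fin' ne] .
      moreover have "0 \<le> \<delta>" using d by linarith
      ultimately show ?thesis by simp
    next
      case False
      hence "(p = v \<and> r \<noteq> v) \<or> (r = v \<and> p \<noteq> v)" using \<open>p = v \<or> r = v\<close> by auto
      thus ?thesis
      proof
        assume a: "p = v \<and> r \<noteq> v"
        have "m \<le> lv r w" unfolding m_def using a pr fin' by (intro Min_le) auto
        thus ?thesis using up[OF pr(1)] pr(3) NN' by simp
      next
        assume a: "r = v \<and> p \<noteq> v"
        have "lv p w \<le> M" unfolding M_def using a pr fin' by (intro Max_ge) auto
        thus ?thesis using lo[OF pr(2)] pr(3) NN' by simp
      qed
    qed
  next
    case False
    have "lv p w \<le> M" unfolding M_def using False pr fin' by (intro Max_ge) auto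
    moreover have "m \<le> lv r w" unfolding m_def using False pr fin' by (intro Min_le) auto
    moreover have "0 \<le> \<delta>" using d by linarith
    ultimately show ?thesis using pr(3) NN' by simp
  qed
qed

lemma orth_prim: "\<exists>w. primitive w \<and> lv A w = lv B w"
proof (cases "A = B")
  case True
  have "primitive (1, 0)" by (simp add: primitive_def)
  thus ?thesis using True by blast
next
  case False
  define p1 where "p1 = fst A - fst B"
  define p2 where "p2 = snd A - snd B"
  have nz: "p1 \<noteq> 0 \<or> p2 \<noteq> 0" using False unfolding p1_def p2_def by (auto simp: prod_eq_iff)
  define g where "g = gcd p1 p2"
  have cop: "coprime (p1 div g) (p2 div g)" unfolding g_def using div_gcd_coprime nz by blast
  have g1: "gcd (-(p2 div g)) (p1 div g) = 1" using cop
    by (simp add: coprime_iff_gcd_eq_1 gcd.commute)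
  have pr: "primitive (-(p2 div g), p1 div g)"
    unfolding primitive_def using g1 by auto
  have e1: "p1 = g * (p1 div g)" unfolding g_def by simp
  have e2: "p2 = g * (p2 div g)" unfolding g_def by simp
  have "p1 * (-(p2 div g)) + p2 * (p1 div g) = 0"
    by (subst e1, subst e2) (simp add: algebra_simps)
  hence "lv A (-(p2 div g), p1 div g) = lv B (-(p2 div g), p1 div g)"
    unfolding lv_def p1_def p2_def by (simp add: algebra_simps)
  thus ?thesis using pr by blast
qed

lemma finite_lattice_in:
  assumes "finite S"
  shows "finite {p. lattice_pt p \<in> convex hull (lattice_pt ` S)}"
proof -
  have "compact (convex hull (lattice_pt ` S))"
    using assms by (intro compact_convex_hull finite_imp_compact) simp
  hence "bounded (convex hull (lattice_pt ` S))" by (rule compact_imp_bounded)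
  then obtain r where r: "\<forall>x\<in>convex hull (lattice_pt ` S). norm x \<le> r" by (auto simp: bounded_iff)
  define R where "R = ceiling r"
  have "{p. lattice_pt p \<in> convex hull (lattice_pt ` S)} \<subseteq> {-R..R} \<times> {-R..R}"
  proof
    fix p assume "p \<in> {p. lattice_pt p \<in> convex hull (lattice_pt ` S)}"
    hence n: "norm (lattice_pt p) \<le> r" using r by auto
    have "\<bar>real_of_int (fst p)\<bar> \<le> r" using n norm_fst_le[of "real_of_int (fst p)" "real_of_int (snd p)"]
      by (simp add: lattice_pt_def)
    moreover have "\<bar>real_of_int (snd p)\<bar> \<le> r" using n norm_snd_le[of "real_of_int (snd p)" "real_of_int (fst p)"]
      by (simp add: lattice_pt_def)
    ultimately show "p \<in> {-R..R} \<times> {-R..R}" unfolding R_def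
      by (cases p) (auto simp: abs_le_iff; linarith)
  qed
  thus ?thesis by (rule finite_subset) simp
qed

lemma near:
  assumes cvx: "convex P" and L: "\<And>p. p \<in> L \<longleftrightarrow> lattice_pt p \<in> P" and v: "v \<in> L"
    and w1: "w1 \<noteq> (0,0)" and q0: "q0 \<in> convex hull (lattice_pt ` (L - {v}))"
    and sub: "convex hull (lattice_pt ` (L - {v})) \<subseteq> P"
    and lev: "pair_ip q0 w1 = of_int (lv v w1)"
  shows "\<exists>q \<in> convex hull (lattice_pt ` (L - {v})). \<forall>w. \<bar>pair_ip q w - of_int (lv v w)\<bar> \<le> \<bar>of_int (det2 w1 w)\<bar>"
proof -
  obtain a b where w1e: "w1 = (a, b)" by (cases w1)
  obtain x0 y0 where q0e: "q0 = (x0, y0)" by (cases q0)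
  obtain v1 v2 where ve: "v = (v1, v2)" by (cases v)
  define dx where "dx = x0 - real_of_int v1"
  define dy where "dy = y0 - real_of_int v2"
  have "x0 * real_of_int a + y0 * real_of_int b = real_of_int v1 * real_of_int a + real_of_int v2 * real_of_int b"
    using lev unfolding w1e q0e ve pair_ip_def lv_def by simp
  hence rel: "real_of_int a * dx + real_of_int b * dy = 0"
    unfolding dx_def dy_def by (simp add: algebra_simps)
  have nz: "real_of_int a ^ 2 + real_of_int b ^ 2 > 0"
    using w1 unfolding w1e by (auto simp: sum_power2_gt_zero_iff)
  define \<mu> where "\<mu> = (real_of_int a * dy - real_of_int b * dx) / (real_of_int a ^ 2 + real_of_int b ^ 2)"
  have hx: "dx = - real_of_int b * \<mu>"
  proof -
    have "dx * (real_of_int a ^ 2 + real_of_int b ^ 2) + real_of_int b * (real_of_int a * dy - real_of_int b * dx)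
       = real_of_int a * (real_of_int a * dx + real_of_int b * dy)"
      by (simp add: power2_eq_square algebra_simps)
    hence "dx * (real_of_int a ^ 2 + real_of_int b ^ 2) = - real_of_int b * (real_of_int a * dy - real_of_int b * dx)"
      using rel by simp
    hence "dx = (- real_of_int b * (real_of_int a * dy - real_of_int b * dx)) / (real_of_int a ^ 2 + real_of_int b ^ 2)"
      using nz by (metis nonzero_mult_div_cancel_right less_irrefl)
    thus ?thesis unfolding \<mu>_def by simp
  qed
  have hy: "dy = real_of_int a * \<mu>"
  proof -
    have "dy * (real_of_int a ^ 2 + real_of_int b ^ 2) - real_of_int a * (real_of_int a * dy - real_of_int b * dx)
       = real_of_int b * (real_of_int a * dx + real_of_int b * dy)"
      by (simp add: power2_eq_square algebra_simps)
    hence "dy * (real_of_int a ^ 2 + real_of_int b ^ 2) = real_of_int a * (real_of_int a * dy - real_of_int b * dx)"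
      using rel by simp
    hence "dy = (real_of_int a * (real_of_int a * dy - real_of_int b * dx)) / (real_of_int a ^ 2 + real_of_int b ^ 2)"
      using nz by (metis nonzero_mult_div_cancel_right less_irrefl)
    thus ?thesis unfolding \<mu>_def by simp
  qed
  have ex: "x0 = real_of_int v1 - real_of_int b * \<mu>" using hx unfolding dx_def by simp
  have ey: "y0 = real_of_int v2 + real_of_int a * \<mu>" using hy unfolding dy_def by simp
  have gen: "pair_ip q0 w - of_int (lv v w) = \<mu> * of_int (det2 w1 w)" for w
  proof -
    obtain c1 c2 where "w = (c1, c2)" by (cases w)
    thus ?thesis unfolding w1e q0e ve pair_ip_def lv_def det2_def ex ey
      by (simp add: algebra_simps)
  qed
  show ?thesis
  proof (cases "\<bar>\<mu>\<bar> \<le> 1")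
    case True
    have "\<bar>pair_ip q0 w - of_int (lv v w)\<bar> \<le> \<bar>of_int (det2 w1 w)\<bar>" for w
      unfolding gen abs_mult using True by (simp add: mult_left_le_one_le)
    thus ?thesis using q0 by blast
  next
    case False
    define s :: int where "s = (if \<mu> > 0 then 1 else -1)"
    have s\<mu>: "\<mu> / \<bar>\<mu>\<bar> = real_of_int s" using False unfolding s_def by auto
    define z where "z = (v1 - s * b, v2 + s * a)"
    define t where "t = 1 / \<bar>\<mu>\<bar>"
    have t: "0 \<le> t" "t \<le> 1" using False unfolding t_def by auto
    have zeq: "lattice_pt z = (1 - t) *\<^sub>R lattice_pt v + t *\<^sub>R q0"
    proof -
      have tm: "t * \<mu> = real_of_int s" using s\<mu> unfolding t_def by simp
      have "(1 - t) * real_of_int v1 + t * x0 = real_of_int v1 - real_of_int b * (t * \<mu>)"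
        unfolding ex by (simp add: algebra_simps)
      hence "real_of_int v1 - real_of_int s * real_of_int b = (1 - t) * real_of_int v1 + t * x0"
        unfolding tm by simp
      moreover have "(1 - t) * real_of_int v2 + t * y0 = real_of_int v2 + real_of_int a * (t * \<mu>)"
        unfolding ey by (simp add: algebra_simps)
      hence "real_of_int v2 + real_of_int s * real_of_int a = (1 - t) * real_of_int v2 + t * y0"
        unfolding tm by simp
      ultimately show ?thesis unfolding z_def lattice_pt_def ve q0e by simp
    qed
    have "lattice_pt v \<in> P" using v L by blast
    moreover have "q0 \<in> P" using q0 sub by blast
    ultimately have "lattice_pt z \<in> P" unfolding zeq using cvx t
      by (simp add: convex_def)
    hence zL: "z \<in> L" using L by blast
    have "z \<noteq> v" using w1 unfolding z_def ve w1e s_def by (auto split: if_splits)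
    hence zin: "lattice_pt z \<in> convex hull (lattice_pt ` (L - {v}))"
      using zL by (intro hull_inc) auto
    have "\<bar>pair_ip (lattice_pt z) w - of_int (lv v w)\<bar> \<le> \<bar>of_int (det2 w1 w)\<bar>" for w
    proof -
      obtain c1 c2 where we: "w = (c1, c2)" by (cases w)
      have "lv z w - lv v w = s * det2 w1 w"
        unfolding we z_def ve w1e lv_def det2_def by (simp add: algebra_simps)
      moreover have "\<bar>s\<bar> = 1" unfolding s_def by simp
      ultimately show ?thesis unfolding pair_ip_lat
        by (metis abs_mult mult_1 of_int_abs of_int_diff order_refl)
    qed
    thus ?thesis using zin by blast
  qed
qed



lemma pair_ip_comb: "pair_ip ((1 - t) *\<^sub>R X + t *\<^sub>R Y) w = (1 - t) * pair_ip X w + t * pair_ip Y w"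
  by (cases X, cases Y) (simp add: pair_ip_def algebra_simps)

lemma lattice_pt_inj: "lattice_pt p = lattice_pt q \<Longrightarrow> p = q"
  by (cases p, cases q) (simp add: lattice_pt_def)

lemma prim_row: assumes "\<bar>a * e - b * c\<bar> = (1::int)" shows "primitive (a, b)"
proof -
  have "gcd a b dvd a * e - b * c" by (simp add: dvd_diff)
  hence "gcd a b dvd \<bar>a * e - b * c\<bar>" by simp
  hence "gcd a b dvd 1" using assms by simp
  hence "\<bar>gcd a b\<bar> = 1" by (simp add: zdvd1_eq)
  hence g: "gcd a b = 1" by simp
  moreover have "(a, b) \<noteq> (0,0)" using g by auto
  ultimately show ?thesis by (simp add: primitive_def)
qed

lemma vert:
  assumes finL: "finite L" and Lne: "L \<noteq> {}" and cvxP: "convex P"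
    and PL: "P = convex hull (lattice_pt ` L)" and Lmem: "\<And>p. p \<in> L \<longleftrightarrow> lattice_pt p \<in> P"
    and w1d: "NN L w1 = int d" and dpos: "d > 0"
    and LW1: "\<And>w. primitive w \<Longrightarrow> int d \<le> NN L w"
  shows "\<exists>v\<in>L. lattice_pt v extreme_point_of P \<and>
           (\<exists>q0\<in>convex hull (lattice_pt ` (L - {v})). pair_ip q0 w1 = of_int (lv v w1))"
proof (rule ccontr)
  assume nv: "\<not> ?thesis"
  define m where "m = Min ((\<lambda>p. lv p w1) ` L)"
  define M where "M = Max ((\<lambda>p. lv p w1) ` L)"
  have Md: "M = m + int d" using w1d unfolding NN_def m_def M_def by simp
  have "m \<in> (\<lambda>p. lv p w1) ` L" unfolding m_def using finL Lne by simp
  then obtain B where B: "B \<in> L" "lv B w1 = m" by auto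
  have "M \<in> (\<lambda>p. lv p w1) ` L" unfolding M_def using finL Lne by simp
  then obtain T where T: "T \<in> L" "lv T w1 = M" by auto
  have lev: "lv v w1 = m \<or> lv v w1 = M" if v: "v \<in> L" "lattice_pt v extreme_point_of P" for v
  proof (rule ccontr)
    assume a: "\<not> (lv v w1 = m \<or> lv v w1 = M)"
    have "m \<le> lv v w1" unfolding m_def using v finL by simp
    moreover have "lv v w1 \<le> M" unfolding M_def using v finL by simp
    ultimately have lt: "m < lv v w1" "lv v w1 < M" using a by auto
    define t where "t = real_of_int (lv v w1 - m) / real d"
    have t: "0 \<le> t" "t \<le> 1" using lt dpos Md unfolding t_def by auto
    have "B \<noteq> v" "T \<noteq> v" using B T lt by auto
    hence inB: "lattice_pt B \<in> convex hull (lattice_pt ` (L - {v}))"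
      and inT: "lattice_pt T \<in> convex hull (lattice_pt ` (L - {v}))"
      using B T by (auto intro!: hull_inc)
    define q0 where "q0 = (1 - t) *\<^sub>R lattice_pt B + t *\<^sub>R lattice_pt T"
    have "q0 \<in> convex hull (lattice_pt ` (L - {v}))"
      unfolding q0_def using inB inT t convex_convex_hull[of "lattice_pt ` (L - {v})"]
      by (simp add: convex_def)
    moreover have "pair_ip q0 w1 = of_int (lv v w1)"
    proof -
      have "pair_ip q0 w1 = (1 - t) * of_int m + t * of_int (m + int d)"
        unfolding q0_def pair_ip_comb pair_ip_lat B(2) T(2) Md ..
      also have "\<dots> = of_int m + t * real d" by (simp add: algebra_simps)
      also have "t * real d = real_of_int (lv v w1 - m)" unfolding t_def using dpos by simp
      finally show ?thesis by simp
    qed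
    ultimately show False using nv v by blast
  qed
  have uniq: "v = v'" if "v \<in> L" "v' \<in> L" "lattice_pt v extreme_point_of P"
     "lv v w1 = lv v' w1" for v v'
  proof (rule ccontr)
    assume "v \<noteq> v'"
    hence "lattice_pt v' \<in> convex hull (lattice_pt ` (L - {v}))" using that by (auto intro!: hull_inc)
    thus False using nv that pair_ip_lat by metis
  qed
  define E where "E = {v. v \<in> L \<and> lattice_pt v extreme_point_of P}"
  define A1 where "A1 = (if \<exists>v\<in>E. lv v w1 = m then (SOME v. v \<in> E \<and> lv v w1 = m) else B)"
  define A2 where "A2 = (if \<exists>v\<in>E. lv v w1 = M then (SOME v. v \<in> E \<and> lv v w1 = M) else B)"
  have sub: "{x. x extreme_point_of P} \<subseteq> lattice_pt ` {A1, A2}"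
  proof
    fix x assume "x \<in> {x. x extreme_point_of P}"
    hence xe: "x extreme_point_of P" by simp
    hence "x \<in> lattice_pt ` L" using extreme_point_of_convex_hull PL by metis
    then obtain v where v: "v \<in> L" "x = lattice_pt v" by auto
    hence vE: "v \<in> E" using xe unfolding E_def by simp
    from lev[OF v(1)] xe v(2) have "lv v w1 = m \<or> lv v w1 = M" by simp
    thus "x \<in> lattice_pt ` {A1, A2}"
    proof
      assume h: "lv v w1 = m"
      hence ex: "\<exists>v\<in>E. lv v w1 = m" using vE by blast
      hence "A1 \<in> E \<and> lv A1 w1 = m" unfolding A1_def by (simp, metis (mono_tags, lifting) someI_ex)
      hence "v = A1" using uniq[of v A1] v vE h unfolding E_def by auto
      thus ?thesis using v by simp
    next
      assume h: "lv v w1 = M"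
      hence ex: "\<exists>v\<in>E. lv v w1 = M" using vE by blast
      hence "A2 \<in> E \<and> lv A2 w1 = M" unfolding A2_def by (simp, metis (mono_tags, lifting) someI_ex)
      hence "v = A2" using uniq[of v A2] v vE h unfolding E_def by auto
      thus ?thesis using v by simp
    qed
  qed
  have "compact P" unfolding PL using finL by (intro compact_convex_hull finite_imp_compact) simp
  hence "P = convex hull {x. x extreme_point_of P}" using cvxP by (rule Krein_Milman_Minkowski)
  also have "\<dots> \<subseteq> convex hull (lattice_pt ` {A1, A2})" using sub by (rule hull_mono)
  finally have Psub: "P \<subseteq> convex hull (lattice_pt ` {A1, A2})" .
  obtain w where w: "primitive w" "lv A1 w = lv A2 w" using orth_prim by blast
  have const: "lv p w = lv A1 w" if "p \<in> L" for p
  proof -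
    have "lattice_pt p \<in> convex hull (lattice_pt ` {A1, A2})" using that Lmem Psub by blast
    from hull_bounds[OF _ _ this, of w] have
      "real_of_int (Min ((\<lambda>p. lv p w) ` {A1, A2})) \<le> of_int (lv p w) \<and> of_int (lv p w) \<le> real_of_int (Max ((\<lambda>p. lv p w) ` {A1, A2}))"
      by (simp add: pair_ip_lat)
    thus ?thesis using w(2) by simp
  qed
  obtain p q where "p \<in> L" "q \<in> L" "NN L w = lv p w - lv q w" using NN_attain[OF finL Lne] by blast
  hence "NN L w = 0" using const by simp
  thus False using LW1[OF w(1)] dpos by simp
qed

theorem lemma2p3:
  fixes P :: "(real \<times> real) set" and d :: nat
  assumes "lattice_polygon P" and "P \<noteq> {}" and "minimal_polygon P"
    and "lattice_width P = real d" and "d > 0"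
  shows "ls_square P = d"
proof -
  obtain S where S: "finite S" "S \<noteq> {}" "P = convex hull (lattice_pt ` S)"
    using assms(1) unfolding lattice_polygon_def by blast
  define L where "L = {p. lattice_pt p \<in> P}"
  have finL: "finite L" unfolding L_def S(3) by (rule finite_lattice_in[OF S(1)])
  have SL: "S \<subseteq> L" unfolding L_def S(3) by (auto intro: hull_inc)
  have Lne: "L \<noteq> {}" using SL S(2) by auto
  have cvxP: "convex P" unfolding S(3) by simp
  have PL: "P = convex hull (lattice_pt ` L)"
  proof
    show "P \<subseteq> convex hull (lattice_pt ` L)" unfolding S(3) using SL by (intro hull_mono) auto
    show "convex hull (lattice_pt ` L) \<subseteq> P" using cvxP by (intro hull_minimal) (auto simp: L_def)
  qed
  have Lmem: "\<And>p. p \<in> L \<longleftrightarrow> lattice_pt p \<in> P" unfolding L_def by simp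
  have lwd: "\<And>w. lw_dir P w = of_int (NN L w)"
    by (subst PL) (rule lw_dir_hull[OF finL Lne])
  have bdd: "bdd_below ((\<lambda>v. lw_dir P v) ` {v. primitive v})"
    unfolding lwd using NN_nonneg[OF finL Lne] by (intro bdd_belowI[where m=0]) auto
  have LW1: "int d \<le> NN L w" if "primitive w" for w
  proof -
    have "lattice_width P \<le> lw_dir P w" unfolding lattice_width_def
      using that by (intro cINF_lower bdd) simp
    thus ?thesis using assms(4) lwd by simp
  qed
  have prim10: "primitive (1,0)" by (simp add: primitive_def)
  have LW2: "\<exists>w1. primitive w1 \<and> NN L w1 = int d"
  proof (rule ccontr)
    assume "\<not> ?thesis"
    hence ge: "int d + 1 \<le> NN L w" if "primitive w" for w using LW1[OF that] that by fastforce
    have "real d + 1 \<le> lattice_width P" unfolding lattice_width_def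
    proof (rule cINF_greatest)
      show "{v. primitive v} \<noteq> {}" using prim10 by blast
      fix w assume "w \<in> {v. primitive v}"
      thus "real d + 1 \<le> lw_dir P w" using ge[of w] unfolding lwd by simp
    qed
    thus False using assms(4) by simp
  qed
  then obtain w1 where w1: "primitive w1" "NN L w1 = int d" by blast
  have w1nz: "w1 \<noteq> (0,0)" using w1 by (simp add: primitive_def)
  obtain u0 where u0: "det2 w1 u0 = 1" using bezout_det[OF w1(1)] by blast
  have key: "\<exists>w2. primitive w2 \<and> det2 w1 w2 \<noteq> 0 \<and> NN L w2 \<le> int d"
  proof (rule ccontr)
    assume "\<not> ?thesis"
    hence H: "int d + 1 \<le> NN L w" if "primitive w" "det2 w1 w \<noteq> 0" for w
      using that by fastforce
    have big: "int d + \<bar>det2 w1 w\<bar> \<le> NN L w" if nz: "det2 w1 w \<noteq> 0" for w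
    proof (cases "\<bar>det2 w1 w\<bar> = 1")
      case True thus ?thesis using H[OF prim_of_det[OF True] nz] by simp
    next
      case False
      define A where "A = \<bar>det2 w1 w\<bar>"
      have ge2: "2 \<le> A" using False nz unfolding A_def by linarith
      obtain u where u: "det2 w1 u = 1" "2 * A * NN L u \<le> 2 * NN L w + A * NN L w1"
        using reduction[OF finL Lne u0 nz] unfolding A_def by blast
      have du: "\<bar>det2 w1 u\<bar> = 1" using u(1) by simp
      have "int d + 1 \<le> NN L u" using H[OF prim_of_det[OF du]] u(1) by simp
      hence "2 * A * (int d + 1) \<le> 2 * A * NN L u" using ge2 by (intro mult_left_mono) auto
      hence "2 * (A * int d) + 2 * A \<le> 2 * NN L w + A * int d" using u(2) w1(2) by (simp add: algebra_simps)
      moreover have "2 * int d \<le> A * int d" using ge2 by (intro mult_right_mono) auto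
      ultimately show ?thesis unfolding A_def by linarith
    qed
    obtain v q0 where v: "v \<in> L" "lattice_pt v extreme_point_of P"
      and q0: "q0 \<in> convex hull (lattice_pt ` (L - {v}))" "pair_ip q0 w1 = of_int (lv v w1)"
      using vert[OF finL Lne cvxP PL Lmem w1(2) assms(5) LW1] by blast
    have sub: "convex hull (lattice_pt ` (L - {v})) \<subseteq> P"
      using cvxP by (intro hull_minimal) (auto simp: L_def)
    obtain q where q: "q \<in> convex hull (lattice_pt ` (L - {v}))"
      "\<And>w. \<bar>pair_ip q w - of_int (lv v w)\<bar> \<le> \<bar>of_int (det2 w1 w)\<bar>"
      using near[OF cvxP Lmem v(1) w1nz q0(1) sub q0(2)] by blast
    define P' where "P' = convex hull (lattice_pt ` (L - {v}))"
    have ne': "L - {v} \<noteq> {}"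
    proof
      assume "L - {v} = {}"
      with q(1) show False by simp
    qed
    have fin': "finite (L - {v})" using finL by simp
    have lpP': "lattice_polygon P'" unfolding lattice_polygon_def P'_def using fin' ne' by blast
    have cv': "convex (P - {lattice_pt v})" using extreme_point_of_stillconvex[OF cvxP] v(2) by blast
    have "lattice_pt ` (L - {v}) \<subseteq> P - {lattice_pt v}"
    proof
      fix x assume "x \<in> lattice_pt ` (L - {v})"
      then obtain p where p: "p \<in> L" "p \<noteq> v" "x = lattice_pt p" by blast
      have "lattice_pt p \<noteq> lattice_pt v" using p(2) lattice_pt_inj by metis
      moreover have "lattice_pt p \<in> P" using p(1) Lmem by blast
      ultimately show "x \<in> P - {lattice_pt v}" using p(3) by simp
    qed
    hence "P' \<subseteq> P - {lattice_pt v}" unfolding P'_def using cv' by (intro hull_minimal)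
    moreover have "lattice_pt v \<in> P" using v(1) Lmem by blast
    ultimately have "P' \<subset> P" by blast
    hence lt: "lattice_width P' < lattice_width P" using assms(3) lpP' unfolding minimal_polygon_def by blast
    have "real d \<le> lattice_width P'" unfolding lattice_width_def
    proof (rule cINF_greatest)
      show "{v. primitive v} \<noteq> {}" using prim10 by blast
      fix w assume "w \<in> {v. primitive v}"
      hence pw: "primitive w" by simp
      have dr: "of_int (NN L w) - \<bar>of_int (det2 w1 w)\<bar> \<le> real_of_int (NN (L - {v}) w)"
        by (rule drop_lemma[OF finL v(1) ne' q(1) q(2)])
      have "int d \<le> NN (L - {v}) w"
      proof (cases "det2 w1 w = 0")
        case True thus ?thesis using dr LW1[OF pw] by simp
      next
        case False thus ?thesis using dr big[OF False] by linarith
      qed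
      thus "real d \<le> lw_dir P' w" unfolding P'_def lw_dir_hull[OF fin' ne'] by simp
    qed
    thus False using lt assms(4) by simp
  qed
  then obtain w2 where w2: "primitive w2" "det2 w1 w2 \<noteq> 0" "NN L w2 \<le> int d" by blast
  have "\<exists>u. \<bar>det2 w1 u\<bar> = 1 \<and> NN L u \<le> int d"
  proof (cases "\<bar>det2 w1 w2\<bar> = 1")
    case True thus ?thesis using w2 by blast
  next
    case False
    define A where "A = \<bar>det2 w1 w2\<bar>"
    have ge2: "2 \<le> A" using False w2(2) unfolding A_def by linarith
    obtain u where u: "det2 w1 u = 1" "2 * A * NN L u \<le> 2 * NN L w2 + A * NN L w1"
      using reduction[OF finL Lne u0 w2(2)] unfolding A_def by blast
    have "A * NN L w1 = A * int d" using w1(2) by simp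
    hence h1: "2 * A * NN L u \<le> 2 * int d + A * int d" using u(2) w2(3) by linarith
    have m: "2 * int d \<le> A * int d" using ge2 by (intro mult_right_mono) auto
    have "(2 * A) * int d = 2 * (A * int d)" by simp
    hence "(2 * A) * NN L u \<le> (2 * A) * int d" using h1 m by linarith
    moreover have pos: "0 < 2 * A" using ge2 by simp
    ultimately have "NN L u \<le> int d" by (rule mult_left_le_imp_le)
    moreover have "\<bar>det2 w1 u\<bar> = 1" using u(1) by simp
    ultimately show ?thesis by blast
  qed
  then obtain u where u: "\<bar>det2 w1 u\<bar> = 1" "NN L u \<le> int d" by blast
  define mu where "mu = Min ((\<lambda>p. lv p u) ` L)"
  define mw where "mw = Min ((\<lambda>p. lv p w1) ` L)"
  define \<phi> where "\<phi> = (\<lambda>(x::real, y::real). (of_int (fst u) * x + of_int (snd u) * y + of_int (- mu),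
                     of_int (fst w1) * x + of_int (snd w1) * y + of_int (- mw)))"
  have uni: "unimodular \<phi>" unfolding unimodular_def
  proof (intro exI conjI)
    show "\<bar>fst u * snd w1 - snd u * fst w1\<bar> = 1" using u(1) unfolding det2_def by (simp add: algebra_simps abs_minus_commute)
    show "\<phi> = (\<lambda>(x, y). (of_int (fst u) * x + of_int (snd u) * y + of_int (- mu),
                     of_int (fst w1) * x + of_int (snd w1) * y + of_int (- mw)))" unfolding \<phi>_def ..
  qed
  have box: "\<phi> ` P \<subseteq> {0..real d} \<times> {0..real d}"
  proof
    fix z assume "z \<in> \<phi> ` P"
    then obtain Q where Q: "Q \<in> P" "z = \<phi> Q" by blast
    have QH: "Q \<in> convex hull (lattice_pt ` L)" using Q(1) PL by simp
    note b1 = hull_bounds[OF finL Lne QH, of u]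
    note b2 = hull_bounds[OF finL Lne QH, of w1]
    have e1: "fst (\<phi> Q) = pair_ip Q u - of_int mu" unfolding \<phi>_def pair_ip_def by (cases Q) (simp add: mult.commute)
    have e2: "snd (\<phi> Q) = pair_ip Q w1 - of_int mw" unfolding \<phi>_def pair_ip_def by (cases Q) (simp add: mult.commute)
    have n1: "NN L u = Max ((\<lambda>p. lv p u) ` L) - mu" unfolding NN_def mu_def ..
    have n2: "NN L w1 = Max ((\<lambda>p. lv p w1) ` L) - mw" unfolding NN_def mw_def ..
    have b1': "of_int mu \<le> pair_ip Q u \<and> pair_ip Q u \<le> of_int (Max ((\<lambda>p. lv p u) ` L))"
      using b1 unfolding mu_def .
    have b2': "of_int mw \<le> pair_ip Q w1 \<and> pair_ip Q w1 \<le> of_int (Max ((\<lambda>p. lv p w1) ` L))"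
      using b2 unfolding mw_def .
    have r1: "real_of_int (Max ((\<lambda>p. lv p u) ` L)) - of_int mu \<le> real d"
    proof -
      have "Max ((\<lambda>p. lv p u) ` L) - mu \<le> int d" using n1 u(2) by linarith
      thus ?thesis by linarith
    qed
    have r2: "real_of_int (Max ((\<lambda>p. lv p w1) ` L)) - of_int mw \<le> real d"
    proof -
      have "Max ((\<lambda>p. lv p w1) ` L) - mw \<le> int d" using n2 w1(2) by linarith
      thus ?thesis by linarith
    qed
    have "fst (\<phi> Q) \<in> {0..real d}" using b1' e1 r1 by simp
    moreover have "snd (\<phi> Q) \<in> {0..real d}" using b2' e2 r2 by simp
    ultimately show "z \<in> {0..real d} \<times> {0..real d}" using Q(2) by (simp add: mem_Times_iff)
  qed
  have lower: "d \<le> k" if ex: "\<exists>\<phi>. unimodular \<phi> \<and> \<phi> ` P \<subseteq> {0..real k} \<times> {0..real k}" for k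
  proof -
    obtain \<psi> where \<psi>: "unimodular \<psi>" "\<psi> ` P \<subseteq> {0..real k} \<times> {0..real k}" using ex by blast
    obtain a b c e t1 t2 :: int where ab: "\<bar>a * e - b * c\<bar> = 1"
      and \<psi>e: "\<psi> = (\<lambda>(x, y). (of_int a * x + of_int b * y + of_int t1, of_int c * x + of_int e * y + of_int t2))"
      using \<psi>(1) unfolding unimodular_def by blast
    have pab: "primitive (a, b)" by (rule prim_row[OF ab])
    have rng: "0 \<le> lv p (a, b) + t1 \<and> lv p (a, b) + t1 \<le> int k" if "p \<in> L" for p
    proof -
      have "\<psi> (lattice_pt p) \<in> {0..real k} \<times> {0..real k}" using \<psi>(2) that Lmem by blast
      hence "0 \<le> real_of_int (lv p (a, b) + t1) \<and> real_of_int (lv p (a, b) + t1) \<le> real k"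
        unfolding \<psi>e lattice_pt_def lv_def by (simp add: mem_Times_iff mult.commute)
      thus ?thesis by linarith
    qed
    obtain p q where pq: "p \<in> L" "q \<in> L" "NN L (a, b) = lv p (a, b) - lv q (a, b)"
      using NN_attain[OF finL Lne] by blast
    have "NN L (a, b) \<le> int k" using rng[OF pq(1)] rng[OF pq(2)] pq(3) by linarith
    thus ?thesis using LW1[OF pab] by linarith
  qed
  show ?thesis unfolding ls_square_def
  proof (rule Least_equality)
    show "\<exists>\<phi>. unimodular \<phi> \<and> \<phi> ` P \<subseteq> {0..real d} \<times> {0..real d}" using uni box by blast
    show "\<And>k. \<exists>\<phi>. unimodular \<phi> \<and> \<phi> ` P \<subseteq> {0..real k} \<times> {0..real k} \<Longrightarrow> d \<le> k" by (rule lower)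
  qed
qed


end
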